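(* In a finite-space SSP game (as in the context), let $\bar\nu\in\Pi_{2,SR}$ be a proper policy of player II. Then the mapping $F_{\bar\nu}$ is a contraction with respect to some weighted sup-norm $\|\cdot\|_\xi$: there exist a positive vector $\xi$ on $R$ and $\beta\in[0,1)$ such that $\|F_{\bar\nu}Q-F_{\bar\nu}Q'\|_\xi\le\beta\|Q-Q'\|_\xi$ for all $Q,Q'\in\mathbb{R}^R$.
   Context: Finite-space game: $S=\{1,\dots,n\}$, $S_o=S\cup\{0\}$, $0$ absorbing cost-free termination state. At $i\in S$ players I and II have finite control sets $U(i),V(i)$; under $(u,v)$ the state moves to $j\in S_o$ w.p. $p_{ij}(u,v)$, with expected one-stage cost $g(i,u,v)$. $\Pi_{1,SR},\Pi_{2,SR}$: stationary randomized policies $\mu=\{\mu(\cdot\mid i)\in\mathcal P(U(i))\}$, $\nu=\{\nu(\cdot\mid i)\in\mathcal P(V(i))\}$. A pair of policies is non-prolonging if the termination state is reached w.p.1 from every initial state. $\nu\in\Pi_{2,SR}$ is proper if $(\mu,\nu)$ is non-prolonging for every $\mu\in\Pi_{1,SR}$. $R=\{(i,u,v):i\in S,u\in U(i),v\in V(i)\}$. For $\bar\nu\in\Pi_{2,SR}$ write $\bar\nu_j=\bar\nu(\cdot\mid j)$ and define $F_{\bar\nu}:\mathbb{R}^R\to\mathbb{R}^R$ by $(F_{\bar\nu}Q)(i,u,v)=g(i,u,v)+\sum_{j\in S}p_{ij}(u,v)\min_{\tilde u\in U(j)}\sum_{\tilde v\in V(j)}\bar\nu_j(\tilde v)Q(j,\tilde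 u,\tilde v)$. For a positive vector $\xi$ on $R$, $\|Q\|_\xi=\max_{(i,u,v)\in R}|Q(i,u,v)|/\xi(i,u,v)$. *)

theory Defs
  imports "HOL-Analysis.Analysis"
begin

text \<open>States: S = {1..n}, termination state 0. Control sets U i, V i.
  Transition probabilities p i j u v (j in {0..n}), one-stage costs g i u v.\<close>

definition ssp_game ::
  "nat \<Rightarrow> (nat \<Rightarrow> 'u set) \<Rightarrow> (nat \<Rightarrow> 'v set) \<Rightarrow> (nat \<Rightarrow> nat \<Rightarrow> 'u \<Rightarrow> 'v \<Rightarrow> real) \<Rightarrow> bool" where
  "ssp_game n U V p \<longleftrightarrow>
     (\<forall>i\<in>{1..n}. finite (U i) \<and> U i \<noteq> {} \<and> finite (V i) \<and> V i \<noteq> {} \<and>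
        (\<forall>u\<in>U i. \<forall>v\<in>V i. (\<forall>j\<in>{0..n}. p i j u v \<ge> 0) \<and> (\<Sum>j\<in>{0..n}. p i j u v) = 1))"

definition is_SR_policy :: "nat \<Rightarrow> (nat \<Rightarrow> 'a set) \<Rightarrow> (nat \<Rightarrow> 'a \<Rightarrow> real) \<Rightarrow> bool" where
  "is_SR_policy n A \<mu> \<longleftrightarrow> (\<forall>i\<in>{1..n}. (\<forall>a\<in>A i. \<mu> i a \<ge> 0) \<and> (\<Sum>a\<in>A i. \<mu> i a) = 1)"

definition trans_prob ::
  "(nat \<Rightarrow> 'u set) \<Rightarrow> (nat \<Rightarrow> 'v set) \<Rightarrow> (nat \<Rightarrow> nat \<Rightarrow> 'u \<Rightarrow> 'v \<Rightarrow> real) \<Rightarrow>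
   (nat \<Rightarrow> 'u \<Rightarrow> real) \<Rightarrow> (nat \<Rightarrow> 'v \<Rightarrow> real) \<Rightarrow> nat \<Rightarrow> nat \<Rightarrow> real" where
  "trans_prob U V p \<mu> \<nu> i j = (\<Sum>u\<in>U i. \<Sum>v\<in>V i. \<mu> i u * \<nu> i v * p i j u v)"

text \<open>k-step transition probabilities between non-terminal states (paths staying in S).\<close>
fun kstep ::
  "nat \<Rightarrow> (nat \<Rightarrow> 'u set) \<Rightarrow> (nat \<Rightarrow> 'v set) \<Rightarrow> (nat \<Rightarrow> nat \<Rightarrow> 'u \<Rightarrow> 'v \<Rightarrow> real) \<Rightarrow>
   (nat \<Rightarrow> 'u \<Rightarrow> real) \<Rightarrow> (nat \<Rightarrow> 'v \<Rightarrow> real) \<Rightarrow> nat \<Rightarrow> nat \<Rightarrow> nat \<Rightarrow> real" where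
  "kstep n U V p \<mu> \<nu> 0 i j = (if i = j then 1 else 0)"
| "kstep n U V p \<mu> \<nu> (Suc k) i j =
     (\<Sum>l\<in>{1..n}. trans_prob U V p \<mu> \<nu> i l * kstep n U V p \<mu> \<nu> k l j)"

text \<open>Non-prolonging: from every initial state, the probability of not having reached the
  (absorbing) termination state 0 by time k tends to 0, i.e. termination is reached w.p.1.\<close>
definition non_prolonging where
  "non_prolonging n U V p \<mu> \<nu> \<longleftrightarrow>
     (\<forall>i\<in>{1..n}. (\<lambda>k. \<Sum>j\<in>{1..n}. kstep n U V p \<mu> \<nu> k i j) \<longlonglongrightarrow> 0)"

definition proper_II where
  "proper_II n U V p \<nu> \<longleftrightarrow>
     is_SR_policy n V \<nu> \<and> (\<forall>\<mu>. is_SR_policy n U \<mu> \<longrightarrow> non_prolonging n U V p \<mu> \<nu>)"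

definition Rset :: "nat \<Rightarrow> (nat \<Rightarrow> 'u set) \<Rightarrow> (nat \<Rightarrow> 'v set) \<Rightarrow> (nat \<times> 'u \<times> 'v) set" where
  "Rset n U V = {(i, u, v). i \<in> {1..n} \<and> u \<in> U i \<and> v \<in> V i}"

definition F_map ::
  "nat \<Rightarrow> (nat \<Rightarrow> 'u set) \<Rightarrow> (nat \<Rightarrow> 'v set) \<Rightarrow> (nat \<Rightarrow> nat \<Rightarrow> 'u \<Rightarrow> 'v \<Rightarrow> real) \<Rightarrow>
   (nat \<Rightarrow> 'u \<Rightarrow> 'v \<Rightarrow> real) \<Rightarrow> (nat \<Rightarrow> 'v \<Rightarrow> real) \<Rightarrow>
   (nat \<Rightarrow> 'u \<Rightarrow> 'v \<Rightarrow> real) \<Rightarrow> (nat \<Rightarrow> 'u \<Rightarrow> 'v \<Rightarrow> real)" where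
  "F_map n U V p g \<nu> Q = (\<lambda>i u v. g i u v +
     (\<Sum>j\<in>{1..n}. p i j u v * Min ((\<lambda>u'. \<Sum>v'\<in>V j. \<nu> j v' * Q j u' v') ` U j)))"

text \<open>Weighted sup-norm over R (the value 0 is included only to make it well-defined when R is empty).\<close>
definition wnorm ::
  "nat \<Rightarrow> (nat \<Rightarrow> 'u set) \<Rightarrow> (nat \<Rightarrow> 'v set) \<Rightarrow> (nat \<Rightarrow> 'u \<Rightarrow> 'v \<Rightarrow> real) \<Rightarrow>
   (nat \<Rightarrow> 'u \<Rightarrow> 'v \<Rightarrow> real) \<Rightarrow> real" where
  "wnorm n U V \<xi> Q = Max (insert 0 ((\<lambda>(i, u, v). \<bar>Q i u v\<bar> / \<xi> i u v) ` Rset n U V))"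

end

theory Submission
  imports Defs
begin
lemma min_img_diff:
  fixes f g :: "'a \<Rightarrow> real"
  assumes "finite A" "A \<noteq> {}" "\<And>a. a \<in> A \<Longrightarrow> \<bar>f a - g a\<bar> \<le> K"
  shows "\<bar>Min (f ` A) - Min (g ` A)\<bar> \<le> K"
proof -
  have "Min (g ` A) \<in> g ` A" using assms(1,2) by (intro Min_in) auto
  then obtain a where a: "a \<in> A" "Min (g ` A) = g a" by auto
  have "Min (f ` A) \<in> f ` A" using assms(1,2) by (intro Min_in) auto
  then obtain b where b: "b \<in> A" "Min (f ` A) = f b" by auto
  have "Min (f ` A) \<le> f a" using a assms(1) by simp
  moreover have "Min (g ` A) \<le> g b" using b assms(1) by simp
  ultimately show ?thesis using assms(3)[OF a(1)] assms(3)[OF b(1)] a b by linarith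
qed

lemma small_pos:
  fixes D :: "real set"
  assumes "finite D" "\<forall>d\<in>D. d > 0"
  shows "\<exists>c. 0 < c \<and> c < 1 \<and> (\<forall>d\<in>D. c < d)"
  using assms
proof (induction D rule: finite_induct)
  case empty
  then show ?case by (intro exI[of _ "1/2"]) auto
next
  case (insert d D)
  then obtain c where c: "0 < c" "c < 1" "\<forall>d\<in>D. c < d" by auto
  show ?case using c insert.prems
    by (intro exI[of _ "min c (d/2)"]) auto
qed

lemma arith_key:
  fixes a s l :: real
  assumes "a \<le> 1" "a \<le> s" "0 \<le> l" "l < 1"
  shows "a + l * s \<le> (1 + l) / 2 * (1 + s)"
proof (cases "s \<le> 1")
  case True
  have "(1 + l) * (s - 1) \<le> 0" using True assms by (intro mult_nonneg_nonpos) auto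
  then show ?thesis using assms by (simp add: algebra_simps)
next
  case False
  have "0 \<le> (1 - l) * (s - 1)" using False assms by (intro mult_nonneg_nonneg) auto
  then show ?thesis using assms by (simp add: algebra_simps)
qed

lemma rank_exists:
  assumes G: "ssp_game n U V p" and P: "proper_II n U V p \<nu>"
  shows "\<exists>r::nat\<Rightarrow>nat. \<forall>j\<in>{1..n}. \<forall>u\<in>U j. \<exists>k\<in>{0..n}.
           (\<Sum>v\<in>V j. \<nu> j v * p j k u v) > 0 \<and> (k = 0 \<or> (k \<in> {1..n} \<and> r k < r j))"
proof -
  define q where "q j u k = (\<Sum>v\<in>V j. \<nu> j v * p j k u v)" for j u k
  have SR: "is_SR_policy n V \<nu>" using P by (simp add: proper_II_def)
  have Gs: "\<And>i. i \<in> {1..n} \<Longrightarrow> finite (U i) \<and> U i \<noteq> {} \<and> finite (V i) \<and> V i \<noteq> {} \<and>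
        (\<forall>u\<in>U i. \<forall>v\<in>V i. (\<forall>j\<in>{0..n}. p i j u v \<ge> 0) \<and> (\<Sum>j\<in>{0..n}. p i j u v) = 1)"
    using G by (simp add: ssp_game_def)
  have nu: "\<And>i. i \<in> {1..n} \<Longrightarrow> (\<forall>a\<in>V i. \<nu> i a \<ge> 0) \<and> (\<Sum>a\<in>V i. \<nu> i a) = 1"
    using SR by (simp add: is_SR_policy_def)
  have qnn: "q j u k \<ge> 0" if "j \<in> {1..n}" "u \<in> U j" "k \<in> {0..n}" for j u k
    unfolding q_def using Gs[OF that(1)] nu[OF that(1)] that by (intro sum_nonneg mult_nonneg_nonneg) auto
  have qsum: "(\<Sum>k\<in>{0..n}. q j u k) = 1" if "j \<in> {1..n}" "u \<in> U j" for j u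
  proof -
    have "(\<Sum>k\<in>{0..n}. q j u k) = (\<Sum>v\<in>V j. \<nu> j v * (\<Sum>k\<in>{0..n}. p j k u v))"
      unfolding q_def by (simp add: sum_distrib_left sum.swap[of _ "{0..n}"])
    also have "\<dots> = (\<Sum>v\<in>V j. \<nu> j v)" using Gs[OF that(1)] that by (intro sum.cong) auto
    also have "\<dots> = 1" using nu[OF that(1)] by simp
    finally show ?thesis .
  qed
  define step where "step A = {j\<in>{1..n}. \<forall>u\<in>U j. \<exists>k\<in>{0..n}. q j u k > 0 \<and> (k = 0 \<or> k \<in> A)}" for A
  define W where "W = rec_nat {} (\<lambda>_ A. step A)"
  have W0: "W 0 = {}" and WS: "\<And>t. W (Suc t) = step (W t)" by (simp_all add: W_def)
  have Wsub: "W t \<subseteq> {1..n}" for t by (cases t) (auto simp: W0 WS step_def)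
  have Wmono1: "W t \<subseteq> W (Suc t)" for t
  proof (induction t)
    case 0 then show ?case by (simp add: W0)
  next
    case (Suc t) then show ?case unfolding WS step_def by blast
  qed
  have Wmono: "t \<le> t' \<Longrightarrow> W t \<subseteq> W t'" for t t'
    by (rule lift_Suc_mono_le[of W]) (use Wmono1 in auto)
  define A where "A = (\<Union>t. W t)"
  have finA: "finite A" using Wsub unfolding A_def by (meson UN_least finite_atLeastAtMost finite_subset)
  have "\<forall>j\<in>A. \<exists>t. j \<in> W t" unfolding A_def by auto
  then obtain f where f: "\<forall>j\<in>A. j \<in> W (f j)" by metis
  define t0 where "t0 = Max (insert 0 (f ` A))"
  have AW: "A \<subseteq> W t0"
  proof
    fix j assume j: "j \<in> A"
    have "f j \<le> t0" unfolding t0_def using finA j by simp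
    then show "j \<in> W t0" using Wmono f j by blast
  qed
  have WA: "W (Suc t0) \<subseteq> A" unfolding A_def by blast
  show ?thesis
  proof (cases "A = {1..n}")
    case True
    define r where "r j = (LEAST t. j \<in> W t)" for j
    show ?thesis
    proof (intro exI[of _ r] ballI)
      fix j u assume j: "j \<in> {1..n}" and u: "u \<in> U j"
      have "\<exists>t. j \<in> W t" using True j unfolding A_def by auto
      then have jr: "j \<in> W (r j)" unfolding r_def by (rule LeastI_ex)
      then have "r j \<noteq> 0" using W0 by (metis empty_iff)
      then obtain m where m: "r j = Suc m" by (cases "r j") auto
      then have "j \<in> step (W m)" using jr WS by simp
      then obtain k where k: "k \<in> {0..n}" "q j u k > 0" "k = 0 \<or> k \<in> W m"
        using u unfolding step_def by blast
      have "k = 0 \<or> (k \<in> {1..n} \<and> r k < r j)"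
      proof (cases "k = 0")
        case False
        then have "k \<in> W m" using k by auto
        then have "r k \<le> m" unfolding r_def by (rule Least_le)
        then show ?thesis using \<open>k \<in> W m\<close> Wsub[of m] m by auto
      qed simp
      then show "\<exists>k\<in>{0..n}. (\<Sum>v\<in>V j. \<nu> j v * p j k u v) > 0 \<and> (k = 0 \<or> (k \<in> {1..n} \<and> r k < r j))"
        using k unfolding q_def by blast
    qed
  next
    case False
    define C where "C = {1..n} - A"
    have AS: "A \<subseteq> {1..n}" using Wsub unfolding A_def by blast
    have "C \<noteq> {}" using False AS unfolding C_def by blast
    then obtain i0 where i0: "i0 \<in> C" by blast
    have trap: "\<exists>u\<in>U j. \<forall>k\<in>{0..n}. q j u k > 0 \<longrightarrow> k \<in> C" if "j \<in> C" for j
    proof -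
      have "j \<notin> W (Suc t0)" using that WA unfolding C_def by blast
      then have "j \<notin> step (W t0)" by (simp add: WS)
      moreover have "j \<in> {1..n}" using that unfolding C_def by blast
      ultimately have "\<not> (\<forall>u\<in>U j. \<exists>k\<in>{0..n}. q j u k > 0 \<and> (k = 0 \<or> k \<in> W t0))"
        unfolding step_def by simp
      then obtain u where u: "u \<in> U j" "\<forall>k\<in>{0..n}. \<not> (q j u k > 0 \<and> (k = 0 \<or> k \<in> W t0))"
        by blast
      have "\<forall>k\<in>{0..n}. q j u k > 0 \<longrightarrow> k \<in> C"
      proof (intro ballI impI)
        fix k assume "k \<in> {0..n}" "q j u k > 0"
        then have "k \<noteq> 0" "k \<notin> A" "k \<le> n" using u(2) AW by auto
        then show "k \<in> C" unfolding C_def by simp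
      qed
      then show ?thesis using u(1) by blast
    qed
    define ch where "ch j = (SOME u. u \<in> U j \<and> (j \<in> C \<longrightarrow> (\<forall>k\<in>{0..n}. q j u k > 0 \<longrightarrow> k \<in> C)))" for j
    have ch: "ch j \<in> U j \<and> (j \<in> C \<longrightarrow> (\<forall>k\<in>{0..n}. q j (ch j) k > 0 \<longrightarrow> k \<in> C))" if jS: "j \<in> {1..n}" for j
    proof -
      have "\<exists>u. u \<in> U j \<and> (j \<in> C \<longrightarrow> (\<forall>k\<in>{0..n}. q j u k > 0 \<longrightarrow> k \<in> C))"
      proof (cases "j \<in> C")
        case True then show ?thesis using trap by blast
      next
        case False
        obtain u where "u \<in> U j" using Gs[OF jS] by blast
        then show ?thesis using False by blast
      qed
      then show ?thesis unfolding ch_def by (rule someI_ex)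
    qed
    define \<mu> where "\<mu> j u = (if u = ch j then 1 else (0::real))" for j u
    have muSR: "is_SR_policy n U \<mu>"
    unfolding is_SR_policy_def
    proof (rule ballI, rule conjI)
      fix i assume i: "i \<in> {1..n}"
      show "\<forall>a\<in>U i. 0 \<le> \<mu> i a" by (simp add: \<mu>_def)
      show "(\<Sum>a\<in>U i. \<mu> i a) = 1" unfolding \<mu>_def using ch[OF i] Gs[OF i] by (simp add: sum.delta')
    qed
    have tp: "trans_prob U V p \<mu> \<nu> i l = q i (ch i) l" if "i \<in> {1..n}" for i l
    proof -
      have "\<And>u. (\<Sum>v\<in>V i. \<mu> i u * \<nu> i v * p i l u v) = (if u = ch i then q i u l else 0)"
        unfolding \<mu>_def q_def by auto
      then show ?thesis unfolding trans_prob_def using ch[OF that] Gs[OF that] by (simp add: sum.delta')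
    qed
    have tpnn: "trans_prob U V p \<mu> \<nu> i l \<ge> 0" if "i \<in> {1..n}" "l \<in> {1..n}" for i l
      using tp[OF that(1)] qnn[OF that(1)] ch[OF that(1)] that by auto
    have knn: "\<forall>i\<in>{1..n}. \<forall>j. kstep n U V p \<mu> \<nu> k i j \<ge> 0" for k
      by (induction k) (auto intro!: sum_nonneg mult_nonneg_nonneg tpnn)
    have kC: "\<forall>i\<in>C. (\<Sum>j\<in>C. kstep n U V p \<mu> \<nu> k i j) = 1" for k
    proof (induction k)
      case 0 then show ?case by (auto simp: sum.delta C_def)
    next
      case (Suc k)
      show ?case
      proof
        fix i assume i: "i \<in> C"
        have iS: "i \<in> {1..n}" using i C_def by auto
        have "(\<Sum>j\<in>C. kstep n U V p \<mu> \<nu> (Suc k) i j)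
            = (\<Sum>l\<in>{1..n}. trans_prob U V p \<mu> \<nu> i l * (\<Sum>j\<in>C. kstep n U V p \<mu> \<nu> k l j))"
          by (simp add: sum_distrib_left sum.swap[of _ C])
        also have "\<dots> = (\<Sum>l\<in>C. trans_prob U V p \<mu> \<nu> i l * (\<Sum>j\<in>C. kstep n U V p \<mu> \<nu> k l j))"
        proof (rule sum.mono_neutral_right)
          show "\<forall>l\<in>{1..n} - C. trans_prob U V p \<mu> \<nu> i l * (\<Sum>j\<in>C. kstep n U V p \<mu> \<nu> k l j) = 0"
          proof
            fix l assume l: "l \<in> {1..n} - C"
            have "\<not> q i (ch i) l > 0" using ch[OF iS] i l by auto
            then have "q i (ch i) l = 0" using qnn[OF iS, of "ch i" l] ch[OF iS] l by auto
            then show "trans_prob U V p \<mu> \<nu> i l * (\<Sum>j\<in>C. kstep n U V p \<mu> \<nu> k l j) = 0"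
              using tp[OF iS] by simp
          qed
        qed (auto simp: C_def)
        also have "\<dots> = (\<Sum>l\<in>C. q i (ch i) l)"
        proof (rule sum.cong)
          fix l assume "l \<in> C"
          then show "trans_prob U V p \<mu> \<nu> i l * (\<Sum>j\<in>C. kstep n U V p \<mu> \<nu> k l j) = q i (ch i) l"
            using Suc.IH tp[OF iS] by simp
        qed simp
        also have "\<dots> = (\<Sum>l\<in>{0..n}. q i (ch i) l)"
        proof (rule sum.mono_neutral_left)
          show "\<forall>l\<in>{0..n} - C. q i (ch i) l = 0"
            using ch[OF iS] i qnn[OF iS, of "ch i"] by force
        qed (auto simp: C_def)
        also have "\<dots> = 1" using qsum[OF iS] ch[OF iS] by blast
        finally show "(\<Sum>j\<in>C. kstep n U V p \<mu> \<nu> (Suc k) i j) = 1" .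
      qed
    qed
    have i0S: "i0 \<in> {1..n}" using i0 C_def by auto
    have lim: "(\<lambda>k. \<Sum>j\<in>{1..n}. kstep n U V p \<mu> \<nu> k i0 j) \<longlonglongrightarrow> 0"
      using P muSR i0S unfolding proper_II_def non_prolonging_def by blast
    have ge: "1 \<le> (\<Sum>j\<in>{1..n}. kstep n U V p \<mu> \<nu> k i0 j)" for k
    proof -
      have "(\<Sum>j\<in>C. kstep n U V p \<mu> \<nu> k i0 j) \<le> (\<Sum>j\<in>{1..n}. kstep n U V p \<mu> \<nu> k i0 j)"
        using knn i0S by (intro sum_mono2) (auto simp: C_def)
      then show ?thesis using kC i0 by simp
    qed
    have "(1::real) \<le> 0" using lim ge by (intro LIMSEQ_le_const) auto
    then show ?thesis by simp
  qed
qed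

theorem lemma4p8:
  fixes n :: nat and U :: "nat \<Rightarrow> 'u set" and V :: "nat \<Rightarrow> 'v set"
    and p :: "nat \<Rightarrow> nat \<Rightarrow> 'u \<Rightarrow> 'v \<Rightarrow> real" and g :: "nat \<Rightarrow> 'u \<Rightarrow> 'v \<Rightarrow> real"
    and \<nu> :: "nat \<Rightarrow> 'v \<Rightarrow> real"
  assumes "ssp_game n U V p"
    and "proper_II n U V p \<nu>"
  shows "\<exists>\<xi> \<beta>. (\<forall>(i, u, v)\<in>Rset n U V. \<xi> i u v > 0) \<and> 0 \<le> \<beta> \<and> \<beta> < 1 \<and>
           (\<forall>Q Q'. wnorm n U V \<xi> (\<lambda>i u v. F_map n U V p g \<nu> Q i u v - F_map n U V p g \<nu> Q' i u v)
                  \<le> \<beta> * wnorm n U V \<xi> (\<lambda>i u v. Q i u v - Q' i u v))"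
proof -
  note G = assms(1) and P = assms(2)
  define S where "S = {1..n}"
  define q where "q j u k = (\<Sum>v\<in>V j. \<nu> j v * p j k u v)" for j u k
  have SR: "is_SR_policy n V \<nu>" using P by (simp add: proper_II_def)
  have Gs: "\<And>i. i \<in> S \<Longrightarrow> finite (U i) \<and> U i \<noteq> {} \<and> finite (V i) \<and> V i \<noteq> {} \<and>
        (\<forall>u\<in>U i. \<forall>v\<in>V i. (\<forall>j\<in>{0..n}. p i j u v \<ge> 0) \<and> (\<Sum>j\<in>{0..n}. p i j u v) = 1)"
    using G by (simp add: ssp_game_def S_def)
  have pnn: "p i j u v \<ge> 0" if "i \<in> S" "u \<in> U i" "v \<in> V i" "j \<in> {0..n}" for i j u v
    using Gs[OF that(1)] that by auto
  have psum: "(\<Sum>j\<in>{0..n}. p i j u v) = 1" if "i \<in> S" "u \<in> U i" "v \<in> V i" for i u v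
    using Gs[OF that(1)] that by auto
  have nu: "\<And>i. i \<in> S \<Longrightarrow> (\<forall>a\<in>V i. \<nu> i a \<ge> 0) \<and> (\<Sum>a\<in>V i. \<nu> i a) = 1"
    using SR by (simp add: is_SR_policy_def S_def)
  have qnn: "q j u k \<ge> 0" if "j \<in> S" "u \<in> U j" "k \<in> {0..n}" for j u k
    unfolding q_def using pnn[OF that(1,2) _ that(3)] nu[OF that(1)] by (intro sum_nonneg mult_nonneg_nonneg) auto
  have qsum: "(\<Sum>k\<in>{0..n}. q j u k) = 1" if "j \<in> S" "u \<in> U j" for j u
  proof -
    have "(\<Sum>k\<in>{0..n}. q j u k) = (\<Sum>v\<in>V j. \<nu> j v * (\<Sum>k\<in>{0..n}. p j k u v))"
      unfolding q_def by (simp add: sum_distrib_left sum.swap[of _ "{0..n}"])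
    also have "\<dots> = (\<Sum>v\<in>V j. \<nu> j v)" using psum that by (intro sum.cong) auto
    also have "\<dots> = 1" using nu[OF that(1)] by simp
    finally show ?thesis .
  qed
  have S0: "{0..n} = insert 0 S" unfolding S_def using atLeastAtMost_insertL[of 0 n] by simp
  have qS: "(\<Sum>k\<in>S. q j u k) = 1 - q j u 0" if "j \<in> S" "u \<in> U j" for j u
    using qsum[OF that] unfolding S0 by (simp add: S_def)
  have exr: "\<exists>r::nat\<Rightarrow>nat. \<forall>j\<in>S. \<forall>u\<in>U j. \<exists>k\<in>{0..n}. q j u k > 0 \<and> (k = 0 \<or> (k \<in> S \<and> r k < r j))"
    using rank_exists[OF G P] by (simp add: q_def S_def)
  then obtain r :: "nat \<Rightarrow> nat" where R: "\<forall>j\<in>S. \<forall>u\<in>U j. \<exists>k\<in>{0..n}. q j u k > 0 \<and> (k = 0 \<or> (k \<in> S \<and> r k < r j))"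
    by (rule exE)
  define T where "T = {(j, u, k). j \<in> S \<and> u \<in> U j \<and> k \<in> {0..n} \<and> q j u k > 0}"
  have finT: "finite T"
  proof (rule finite_subset)
    show "T \<subseteq> Sigma S (\<lambda>j. U j \<times> {0..n})" unfolding T_def by auto
    show "finite (Sigma S (\<lambda>j. U j \<times> {0..n}))" using Gs by (intro finite_SigmaI) (auto simp: S_def)
  qed
  have Tpos: "\<forall>d\<in>(\<lambda>(j,u,k). q j u k) ` T. d > 0" unfolding T_def by auto
  obtain c where c: "0 < c" "c < 1" "\<forall>d\<in>(\<lambda>(j,u,k). q j u k) ` T. c < d"
    using small_pos[OF finite_imageI[OF finT] Tpos] by blast
  have cq: "c < q j u k" if "j \<in> S" "u \<in> U j" "k \<in> {0..n}" "q j u k > 0" for j u k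
  proof -
    have "(j, u, k) \<in> T" unfolding T_def using that by simp
    then have "q j u k \<in> (\<lambda>(j,u,k). q j u k) ` T" by (rule image_eqI[rotated]) simp
    then show ?thesis using c(3) by blast
  qed
  define x where "x k = 2 - c ^ Suc (r k)" for k
  have cpow: "0 < c ^ m" "c ^ m \<le> 1" for m using c by (auto intro: power_le_one)
  have x1: "1 \<le> x k" and x2: "x k \<le> 2" for k unfolding x_def using cpow[of "Suc (r k)"] by auto
  have key: "(\<Sum>k\<in>S. q j u k * x k) < x j" if j: "j \<in> S" and u: "u \<in> U j" for j u
  proof -
    have qn: "\<And>k. k \<in> S \<Longrightarrow> q j u k \<ge> 0" using qnn[OF j u] by (auto simp: S_def)
    have "(\<Sum>k\<in>S. q j u k * x k) = 2 * (\<Sum>k\<in>S. q j u k) - (\<Sum>k\<in>S. q j u k * c ^ Suc (r k))"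
      unfolding x_def by (simp add: algebra_simps sum_subtractf sum_distrib_left)
    also have "\<dots> = 2 - 2 * q j u 0 - (\<Sum>k\<in>S. q j u k * c ^ Suc (r k))" using qS[OF j u] by simp
    finally have eq: "(\<Sum>k\<in>S. q j u k * x k) = 2 - 2 * q j u 0 - (\<Sum>k\<in>S. q j u k * c ^ Suc (r k))" .
    have nn: "\<And>k. k \<in> S \<Longrightarrow> 0 \<le> q j u k * c ^ Suc (r k)" using qn c(1) by (intro mult_nonneg_nonneg) auto
    have q0: "q j u 0 \<ge> 0" using qnn[OF j u] by simp
    obtain k where k: "k \<in> {0..n}" "q j u k > 0" "k = 0 \<or> (k \<in> S \<and> r k < r j)" using R j u by blast
    show ?thesis
    proof (cases "k = 0")
      case True
      have "c ^ Suc (r j) \<le> c" using c by (simp add: power_le_one mult_left_le)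
      moreover have "c < q j u 0" using cq[OF j u k(1,2)] True by simp
      moreover have "0 \<le> (\<Sum>k\<in>S. q j u k * c ^ Suc (r k))" using nn by (intro sum_nonneg) auto
      ultimately show ?thesis using eq q0 unfolding x_def by linarith
    next
      case False
      then have kS: "k \<in> S" and rk: "r k < r j" using k by auto
      have "q j u k * c ^ Suc (r k) \<le> (\<Sum>k\<in>S. q j u k * c ^ Suc (r k))"
        using nn kS by (intro member_le_sum) (auto simp: S_def)
      moreover have "c ^ Suc (r j) \<le> c ^ Suc (Suc (r k))"
        using c rk by (intro power_decreasing) auto
      moreover have "c * c ^ Suc (r k) < q j u k * c ^ Suc (r k)"
        using cq[OF j u k(1,2)] cpow[of "Suc (r k)"] by (intro mult_strict_right_mono) auto
      ultimately show ?thesis using eq q0 unfolding x_def by simp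
    qed
  qed
  define lam where "lam = Max (insert 0 ((\<lambda>(j, u). (\<Sum>k\<in>S. q j u k * x k) / x j) ` Sigma S U))"
  have finSU: "finite (Sigma S U)" using Gs by (intro finite_SigmaI) (auto simp: S_def)
  have lam0: "0 \<le> lam" unfolding lam_def using finSU by simp
  have lam1: "lam < 1" unfolding lam_def using finSU
  proof (subst Max_less_iff)
    show "\<forall>a\<in>insert 0 ((\<lambda>(j, u). (\<Sum>k\<in>S. q j u k * x k) / x j) ` Sigma S U). a < 1"
    proof
      fix a assume "a \<in> insert 0 ((\<lambda>(j, u). (\<Sum>k\<in>S. q j u k * x k) / x j) ` Sigma S U)"
      then consider "a = 0" | j u where "j \<in> S" "u \<in> U j" "a = (\<Sum>k\<in>S. q j u k * x k) / x j" by auto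
      then show "a < 1"
      proof cases
        case 2 then show ?thesis using key[OF 2(1,2)] x1[of j] by simp
      qed simp
    qed
  qed auto
  have lamb: "(\<Sum>k\<in>S. q j u k * x k) \<le> lam * x j" if "j \<in> S" "u \<in> U j" for j u
  proof -
    have "(\<Sum>k\<in>S. q j u k * x k) / x j \<le> lam" unfolding lam_def using finSU that
      by (intro Max_ge) auto
    then show ?thesis using x1[of j] by (simp add: divide_le_eq)
  qed
  define \<xi> where "\<xi> i u v = 1 + (\<Sum>k\<in>S. p i k u v * x k)" for i u v
  define \<beta> where "\<beta> = (1 + lam) / 2"
  have xipos: "\<xi> i u v \<ge> 1" if "i \<in> S" "u \<in> U i" "v \<in> V i" for i u v
    unfolding \<xi>_def using pnn[OF that] x1 by (intro add_increasing2 sum_nonneg mult_nonneg_nonneg) (auto simp: S_def intro: order_trans[OF zero_le_one])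
  have eta: "(\<Sum>v\<in>V j. \<nu> j v * \<xi> j u v) \<le> 1 + lam * x j" if "j \<in> S" "u \<in> U j" for j u
  proof -
    have "(\<Sum>v\<in>V j. \<nu> j v * \<xi> j u v) = (\<Sum>v\<in>V j. \<nu> j v) + (\<Sum>v\<in>V j. \<Sum>k\<in>S. \<nu> j v * p j k u v * x k)"
      unfolding \<xi>_def by (simp add: algebra_simps sum.distrib sum_distrib_left)
    also have "\<dots> = 1 + (\<Sum>k\<in>S. q j u k * x k)"
      using nu[OF that(1)] unfolding q_def by (simp add: sum.swap[of _ S] sum_distrib_right)
    finally show ?thesis using lamb[OF that] by simp
  qed
  have finR: "finite (Rset n U V)"
  proof (rule finite_subset)
    show "Rset n U V \<subseteq> Sigma S (\<lambda>i. U i \<times> V i)" unfolding Rset_def S_def by auto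
    show "finite (Sigma S (\<lambda>i. U i \<times> V i))" using Gs by (intro finite_SigmaI) (auto simp: S_def)
  qed
  show ?thesis
  proof (intro exI[of _ \<xi>] exI[of _ \<beta>] conjI allI)
    show "\<forall>(i, u, v)\<in>Rset n U V. 0 < \<xi> i u v"
      using xipos unfolding Rset_def S_def by (auto intro: less_le_trans[OF zero_less_one])
    show "0 \<le> \<beta>" "\<beta> < 1" using lam0 lam1 unfolding \<beta>_def by auto
    fix Q Q' :: "nat \<Rightarrow> 'u \<Rightarrow> 'v \<Rightarrow> real"
    define N where "N = wnorm n U V \<xi> (\<lambda>i u v. Q i u v - Q' i u v)"
    have N0: "0 \<le> N" unfolding N_def wnorm_def using finR by simp
    have ND: "\<bar>Q i u v - Q' i u v\<bar> \<le> N * \<xi> i u v" if "i \<in> S" "u \<in> U i" "v \<in> V i" for i u v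
    proof -
      have "(i, u, v) \<in> Rset n U V" using that by (simp add: Rset_def S_def)
      then have "\<bar>Q i u v - Q' i u v\<bar> / \<xi> i u v \<in> (\<lambda>(i, u, v). \<bar>Q i u v - Q' i u v\<bar> / \<xi> i u v) ` Rset n U V"
        by (rule image_eqI[rotated]) simp
      then have "\<bar>Q i u v - Q' i u v\<bar> / \<xi> i u v \<le> N" unfolding N_def wnorm_def
        using finR by (intro Max_ge) auto
      then show ?thesis using xipos[OF that] by (simp add: divide_le_eq)
    qed
    define M where "M Z j = Min ((\<lambda>u'. \<Sum>v'\<in>V j. \<nu> j v' * Z j u' v') ` U j)" for Z j
    have Mb: "\<bar>M Q j - M Q' j\<bar> \<le> N * (1 + lam * x j)" if j: "j \<in> S" for j
      unfolding M_def
    proof (rule min_img_diff)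
      show "finite (U j)" "U j \<noteq> {}" using Gs[OF j] by auto
      fix u assume u: "u \<in> U j"
      have "\<bar>(\<Sum>v'\<in>V j. \<nu> j v' * Q j u v') - (\<Sum>v'\<in>V j. \<nu> j v' * Q' j u v')\<bar>
          = \<bar>\<Sum>v'\<in>V j. \<nu> j v' * (Q j u v' - Q' j u v')\<bar>"
        by (simp add: sum_subtractf right_diff_distrib)
      also have "\<dots> \<le> (\<Sum>v'\<in>V j. \<bar>\<nu> j v' * (Q j u v' - Q' j u v')\<bar>)" by (rule sum_abs)
      also have "\<dots> \<le> (\<Sum>v'\<in>V j. \<nu> j v' * (N * \<xi> j u v'))"
      proof (rule sum_mono)
        fix v assume v: "v \<in> V j"
        have "\<nu> j v \<ge> 0" using nu[OF j] v by auto
        then show "\<bar>\<nu> j v * (Q j u v - Q' j u v)\<bar> \<le> \<nu> j v * (N * \<xi> j u v)"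
          using ND[OF j u v] by (simp add: abs_mult mult_left_mono)
      qed
      also have "\<dots> = N * (\<Sum>v'\<in>V j. \<nu> j v' * \<xi> j u v')" by (simp add: sum_distrib_left algebra_simps)
      also have "\<dots> \<le> N * (1 + lam * x j)" using eta[OF j u] N0 by (rule mult_left_mono)
      finally show "\<bar>(\<Sum>v'\<in>V j. \<nu> j v' * Q j u v') - (\<Sum>v'\<in>V j. \<nu> j v' * Q' j u v')\<bar> \<le> N * (1 + lam * x j)" .
    qed
    have "wnorm n U V \<xi> (\<lambda>i u v. F_map n U V p g \<nu> Q i u v - F_map n U V p g \<nu> Q' i u v) \<le> \<beta> * N"
      unfolding wnorm_def
    proof (subst Max_le_iff)
      show "finite (insert 0 ((\<lambda>(i, u, v). \<bar>F_map n U V p g \<nu> Q i u v - F_map n U V p g \<nu> Q' i u v\<bar> / \<xi> i u v) ` Rset n U V))"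
        using finR by simp
      show "\<forall>a\<in>insert 0 ((\<lambda>(i, u, v). \<bar>F_map n U V p g \<nu> Q i u v - F_map n U V p g \<nu> Q' i u v\<bar> / \<xi> i u v) ` Rset n U V). a \<le> \<beta> * N"
      proof
        fix a assume "a \<in> insert 0 ((\<lambda>(i, u, v). \<bar>F_map n U V p g \<nu> Q i u v - F_map n U V p g \<nu> Q' i u v\<bar> / \<xi> i u v) ` Rset n U V)"
        then consider "a = 0" | t where "t \<in> Rset n U V"
            "a = (\<lambda>(i, u, v). \<bar>F_map n U V p g \<nu> Q i u v - F_map n U V p g \<nu> Q' i u v\<bar> / \<xi> i u v) t"
          by blast
        then show "a \<le> \<beta> * N"
        proof cases
          case 1 then show ?thesis using lam0 N0 unfolding \<beta>_def by simp
        next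
          case 2
          obtain i u v where t: "t = (i, u, v)" by (cases t)
          have i: "i \<in> S" and u: "u \<in> U i" and v: "v \<in> V i" using 2(1) unfolding t Rset_def S_def by auto
          have a: "a = \<bar>F_map n U V p g \<nu> Q i u v - F_map n U V p g \<nu> Q' i u v\<bar> / \<xi> i u v"
            using 2(2) unfolding t by simp
          have pn: "\<And>j. j \<in> S \<Longrightarrow> p i j u v \<ge> 0" using pnn[OF i u v] by (auto simp: S_def)
          have "F_map n U V p g \<nu> Q i u v - F_map n U V p g \<nu> Q' i u v = (\<Sum>j\<in>S. p i j u v * (M Q j - M Q' j))"
            unfolding F_map_def M_def S_def by (simp add: sum_subtractf right_diff_distrib)
          then have "\<bar>F_map n U V p g \<nu> Q i u v - F_map n U V p g \<nu> Q' i u v\<bar> \<le> (\<Sum>j\<in>S. \<bar>p i j u v * (M Q j - M Q' j)\<bar>)"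
            by (simp add: sum_abs)
          also have "\<dots> \<le> (\<Sum>j\<in>S. p i j u v * (N * (1 + lam * x j)))"
            using pn Mb by (intro sum_mono) (simp add: abs_mult mult_left_mono)
          also have "\<dots> = (\<Sum>j\<in>S. N * p i j u v + (N * lam) * (p i j u v * x j))"
            by (rule sum.cong) (simp_all add: algebra_simps)
          also have "\<dots> = N * (\<Sum>j\<in>S. p i j u v) + (N * lam) * (\<Sum>j\<in>S. p i j u v * x j)"
            by (simp only: sum.distrib sum_distrib_left)
          also have "\<dots> = N * ((\<Sum>j\<in>S. p i j u v) + lam * (\<Sum>j\<in>S. p i j u v * x j))"
            by (simp add: algebra_simps)
          also have "\<dots> \<le> N * (\<beta> * (1 + (\<Sum>j\<in>S. p i j u v * x j)))"
          proof (rule mult_left_mono[OF _ N0])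
            have a1: "(\<Sum>j\<in>S. p i j u v) \<le> 1"
            proof -
              have "(\<Sum>j\<in>{0..n}. p i j u v) = p i 0 u v + (\<Sum>j\<in>S. p i j u v)"
                unfolding S0 by (subst sum.insert) (auto simp: S_def)
              then show ?thesis using psum[OF i u v] pnn[OF i u v, of 0] by simp
            qed
            have a2: "(\<Sum>j\<in>S. p i j u v) \<le> (\<Sum>j\<in>S. p i j u v * x j)"
            proof (rule sum_mono)
              fix j assume "j \<in> S"
              then show "p i j u v \<le> p i j u v * x j" using mult_left_mono[OF x1[of j] pn[OF \<open>j \<in> S\<close>]] by simp
            qed
            show "(\<Sum>j\<in>S. p i j u v) + lam * (\<Sum>j\<in>S. p i j u v * x j) \<le> \<beta> * (1 + (\<Sum>j\<in>S. p i j u v * x j))"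
              unfolding \<beta>_def using arith_key[OF a1 a2 lam0 lam1] .
          qed
          also have "\<dots> = \<beta> * N * \<xi> i u v" unfolding \<xi>_def by simp
          finally show ?thesis using a xipos[OF i u v] by (simp add: divide_le_eq)
        qed
      qed
    qed (simp)
    then show "wnorm n U V \<xi> (\<lambda>i u v. F_map n U V p g \<nu> Q i u v - F_map n U V p g \<nu> Q' i u v)
                  \<le> \<beta> * wnorm n U V \<xi> (\<lambda>i u v. Q i u v - Q' i u v)" unfolding N_def .
  qed
qed

end
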